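(* Let $\alpha\in(0,1)$ and $\varphi\in C^1([0,\infty))$ with $\varphi(0)=0$. Then for all $t>0$, $$\frac{d}{dt}\int_0^t\!\!\int_0^t\tfrac12N_0^\alpha(t-r,t-s)\,\varphi(s)\varphi(r)\,dr\,ds=\varphi(t)\,{}^{C}\!D^\alpha\varphi(t)-\int_0^t\!\!\int_0^tN_1^\alpha(t-r,t-s)\,\dot\varphi(s)\dot\varphi(r)\,dr\,ds .$$
   Context: For $\alpha\in(0,1)$ and $r,s\ge0$ with $r+s>0$: $N_0^\alpha(r,s)=\dfrac{\alpha}{\Gamma(1-\alpha)(r+s)^{1+\alpha}}$ and $N_1^\alpha(r,s)=\dfrac{1}{\Gamma(1-\alpha)(r+s)^{\alpha}}$. The Caputo derivative of order $\alpha$ of $g\in C^1([0,\infty))$ is ${}^{C}\!D^\alpha g(t)=\dfrac{1}{\Gamma(1-\alpha)}\displaystyle\int_0^t(t-\tau)^{-\alpha}\dot g(\tau)\,d\tau$. *)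

theory Defs
  imports "HOL-Analysis.Analysis"
begin

definition N0 :: "real \<Rightarrow> real \<Rightarrow> real \<Rightarrow> real" where
  "N0 \<alpha> r s = \<alpha> / (Gamma (1 - \<alpha>) * (r + s) powr (1 + \<alpha>))"

definition N1 :: "real \<Rightarrow> real \<Rightarrow> real \<Rightarrow> real" where
  "N1 \<alpha> r s = 1 / (Gamma (1 - \<alpha>) * (r + s) powr \<alpha>)"

definition caputo :: "real \<Rightarrow> (real \<Rightarrow> real) \<Rightarrow> real \<Rightarrow> real" where
  "caputo \<alpha> g t = 1 / Gamma (1 - \<alpha>) *
     (LINT \<tau>:{0..t}|lborel. (t - \<tau>) powr (-\<alpha>) * deriv g \<tau>)"

end

theory Submission
  imports Defs
begin

lemma pow1d:
  fixes \<beta> T :: real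
  assumes "\<beta> < 1" "0 \<le> T"
  shows "integrable lborel (\<lambda>x. indicator {0..T} x * x powr (-\<beta>))"
proof -
  have "(\<lambda>x. x powr (-\<beta>)) integrable_on {0..T}"
    using assms by (intro integrable_on_powr_from_0) auto
  then have "(\<lambda>x. x powr (-\<beta>)) absolutely_integrable_on {0..T}"
    by (intro nonnegative_absolutely_integrable_1) auto
  then have "integrable lebesgue (\<lambda>x. indicator {0..T} x * x powr (-\<beta>))"
    by (simp add: set_integrable_def)
  then show ?thesis
    by (subst (asm) integrable_completion) auto
qed


lemma prod_int:
  fixes f g :: "real \<Rightarrow> real"
  assumes "integrable lborel f" "integrable lborel g"
  shows "integrable (lborel \<Otimes>\<^sub>M lborel) (\<lambda>x. f (fst x) * g (snd x))"
proof (rule integrableI_bounded)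
  have [measurable]: "f \<in> borel_measurable lborel" "g \<in> borel_measurable lborel"
    using assms by (auto dest: borel_measurable_integrable)
  show "(\<lambda>x. f (fst x) * g (snd x)) \<in> borel_measurable (lborel \<Otimes>\<^sub>M lborel)" by measurable
  have "(\<integral>\<^sup>+x. ennreal (norm (f (fst x) * g (snd x))) \<partial>(lborel \<Otimes>\<^sub>M lborel))
      = (\<integral>\<^sup>+a. \<integral>\<^sup>+b. ennreal (norm (f a)) * ennreal (norm (g b)) \<partial>lborel \<partial>lborel)"
    by (subst lborel.nn_integral_fst[symmetric]) (auto simp: abs_mult ennreal_mult)
  also have "\<dots> = (\<integral>\<^sup>+a. ennreal (norm (f a)) * (\<integral>\<^sup>+b. ennreal (norm (g b)) \<partial>lborel) \<partial>lborel)"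
    by (simp add: nn_integral_cmult)
  also have "\<dots> = (\<integral>\<^sup>+a. ennreal (norm (f a)) \<partial>lborel) * (\<integral>\<^sup>+b. ennreal (norm (g b)) \<partial>lborel)"
    by (simp add: nn_integral_multc)
  also have "\<dots> < \<infinity>" using assms by (auto simp: integrable_iff_bounded ennreal_mult_less_top)
  finally show "(\<integral>\<^sup>+x. ennreal (norm (f (fst x) * g (snd x))) \<partial>(lborel \<Otimes>\<^sub>M lborel)) < \<infinity>" .
qed

lemma AE_pair_ne: "AE x in (lborel \<Otimes>\<^sub>M lborel). fst x \<noteq> (c::real) \<and> snd x \<noteq> (d::real)"
proof (rule lborel_pair.AE_pair_measure)
  show "{x \<in> space (lborel \<Otimes>\<^sub>M lborel). fst x \<noteq> c \<and> snd x \<noteq> d} \<in> sets (lborel \<Otimes>\<^sub>M lborel)"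
    by measurable
  show "AE a in lborel. AE b in lborel. fst (a, b) \<noteq> c \<and> snd (a, b) \<noteq> d"
    using AE_lborel_singleton[of c] 
  proof eventually_elim
    case (elim a)
    show ?case using AE_lborel_singleton[of d] by eventually_elim (use elim in auto)
  qed
qed

lemma kbound:
  fixes a b \<gamma> :: real
  assumes "0 \<le> \<gamma>" "0 < a" "0 < b"
  shows "(a + b) powr (-\<gamma>) \<le> a powr (-\<gamma>/2) * b powr (-\<gamma>/2)"
proof -
  have "a * b \<le> (a + b)^2" using assms by (simp add: power2_eq_square algebra_simps mult_pos_pos)
  then have "sqrt (a*b) \<le> sqrt ((a + b)^2)" by (rule real_sqrt_le_mono)
  then have "sqrt (a*b) \<le> a + b" using assms by simp
  then have 1: "(a*b) powr (1/2) \<le> a + b" using assms by (simp add: powr_half_sqrt)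
  have "((a*b) powr (1/2)) powr \<gamma> \<le> (a + b) powr \<gamma>"
    using assms 1 by (intro powr_mono2) auto
  then have "a powr (\<gamma>/2) * b powr (\<gamma>/2) \<le> (a+b) powr \<gamma>"
    using assms by (simp add: powr_powr powr_mult)
  moreover have "0 < a powr (\<gamma>/2) * b powr (\<gamma>/2)" using assms by simp
  ultimately have "inverse ((a+b) powr \<gamma>) \<le> inverse (a powr (\<gamma>/2) * b powr (\<gamma>/2))"
    by (rule le_imp_inverse_le)
  then show ?thesis using assms by (simp add: powr_minus)
qed

lemma kint:
  fixes \<gamma> T :: real
  assumes "0 \<le> \<gamma>" "\<gamma> < 2" "0 \<le> T"
  shows "integrable (lborel \<Otimes>\<^sub>M lborel)
     (\<lambda>x. indicator ({0..T}\<times>{0..T}) x * (fst x + snd x) powr (-\<gamma>))"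
proof -
  let ?g = "\<lambda>x::real. indicator {0..T} x * x powr (-(\<gamma>/2))"
  show ?thesis
  proof (rule Bochner_Integration.integrable_bound[where f="\<lambda>x. ?g (fst x) * ?g (snd x)"])
  have gi: "integrable lborel ?g" by (rule pow1d) (use assms in auto)
  show "integrable (lborel \<Otimes>\<^sub>M lborel) (\<lambda>x. ?g (fst x) * ?g (snd x))"
    by (rule prod_int[OF gi gi])
  show "(\<lambda>x. indicator ({0..T}\<times>{0..T}) x * (fst x + snd x) powr (-\<gamma>)) \<in> borel_measurable (lborel \<Otimes>\<^sub>M lborel)"
    by measurable
  show "AE x in lborel \<Otimes>\<^sub>M lborel. norm (indicator ({0..T}\<times>{0..T}) x * (fst x + snd x) powr (-\<gamma>)) \<le> norm (?g (fst x) * ?g (snd x))"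
    using AE_pair_ne[of 0 0]
  proof eventually_elim
    case (elim x)
    show ?case
    proof (cases "x \<in> {0..T}\<times>{0..T}")
      case True
      then have "0 < fst x" "0 < snd x" using elim by (auto simp: mem_Times_iff)
      then show ?thesis using True kbound[of \<gamma> "fst x" "snd x"] assms
        by (auto simp: mem_Times_iff indicator_def abs_mult)
    qed (auto simp: indicator_def)
  qed
  qed
qed


lemma bdd_mult:
  fixes f g :: "'a \<Rightarrow> real"
  assumes "integrable N f" "g \<in> borel_measurable N" "\<And>x. \<bar>g x\<bar> \<le> C"
  shows "integrable N (\<lambda>x. f x * g x)"
proof (rule Bochner_Integration.integrable_bound[where f="\<lambda>x. C * \<bar>f x\<bar>"])
  show "integrable N (\<lambda>x. C * \<bar>f x\<bar>)" using assms by auto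
  show "(\<lambda>x. f x * g x) \<in> borel_measurable N"
    using assms borel_measurable_integrable by measurable
  show "AE x in N. norm (f x * g x) \<le> norm (C * \<bar>f x\<bar>)"
  proof (intro AE_I2)
    fix x
    have "\<bar>f x\<bar> * \<bar>g x\<bar> \<le> \<bar>f x\<bar> * C" using assms(3)[of x] by (intro mult_left_mono) auto
    moreover have "0 \<le> C" using assms(3)[of x] by linarith
    ultimately show "norm (f x * g x) \<le> norm (C * \<bar>f x\<bar>)" by (simp add: abs_mult mult.commute)
  qed
qed

locale S =
  fixes \<alpha> T L :: real and \<phi> \<phi>' :: "real \<Rightarrow> real"
  assumes a0: "0 < \<alpha>" and a1: "\<alpha> < 1"
    and der: "\<And>x. 0 \<le> x \<Longrightarrow> (\<phi> has_real_derivative \<phi>' x) (at x within {0..})"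
    and dcont: "continuous_on {0..} \<phi>'"
    and z: "\<phi> 0 = 0" and Tpos: "0 < T"
    and Lb: "\<And>x. x \<in> {0..T} \<Longrightarrow> \<bar>\<phi>' x\<bar> \<le> L"
begin

definition p where "p x = max 0 (min T x)"
definition ph where "ph x = \<phi> (p x)"
definition ps where "ps x = \<phi>' (p x)"
definition dd where "dd x = indicator {0<..} x * ps x"
definition G where "G = Gamma (1 - \<alpha>)"
abbreviation M where "M \<equiv> (lborel \<Otimes>\<^sub>M lborel :: (real \<times> real) measure)"
abbreviation B where "B \<equiv> {0..T} \<times> {0..T}"

lemma Gpos: "0 < G" unfolding G_def using a1 by auto

lemma Lnn: "0 \<le> L" using Lb[of 0] Tpos by auto

lemma phi_cont: "continuous_on {0..} \<phi>"
  unfolding continuous_on_eq_continuous_within using der by (meson DERIV_continuous atLeast_iff)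

lemma p_cont: "continuous_on UNIV p" unfolding p_def by (intro continuous_intros)
lemma p_range: "p x \<in> {0..T}" unfolding p_def using Tpos by auto

lemma ph_cont: "continuous_on UNIV ph"
  unfolding ph_def by (rule continuous_on_compose2[OF phi_cont p_cont]) (use p_range in auto)
lemma ps_cont: "continuous_on UNIV ps"
  unfolding ps_def by (rule continuous_on_compose2[OF dcont p_cont]) (use p_range in auto)

lemma ph_meas[measurable]: "ph \<in> borel_measurable borel"
  by (rule borel_measurable_continuous_onI[OF ph_cont])
lemma ps_meas[measurable]: "ps \<in> borel_measurable borel"
  by (rule borel_measurable_continuous_onI[OF ps_cont])
lemma dd_meas[measurable]: "dd \<in> borel_measurable borel"
  unfolding dd_def by measurable

lemma phi_lip: assumes "x \<in> {0..T}" "y \<in> {0..T}" shows "\<bar>\<phi> x - \<phi> y\<bar> \<le> L * \<bar>x - y\<bar>"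
proof -
  have d: "\<And>z. z \<in> {0..T} \<Longrightarrow> (\<phi> has_real_derivative \<phi>' z) (at z within {0..T})"
    by (rule DERIV_subset[OF der]) auto
  show ?thesis using field_differentiable_bound[of "{0..T}" \<phi> \<phi>' L x y, OF _ d] Lb assms by auto
qed

lemma p_lip: "\<bar>p x - p y\<bar> \<le> \<bar>x - y\<bar>" unfolding p_def by auto

lemma ph_lip: "\<bar>ph x - ph y\<bar> \<le> L * \<bar>x - y\<bar>"
proof -
  have "\<bar>ph x - ph y\<bar> \<le> L * \<bar>p x - p y\<bar>" unfolding ph_def by (rule phi_lip[OF p_range p_range])
  also have "\<dots> \<le> L * \<bar>x - y\<bar>" by (rule mult_left_mono[OF p_lip Lnn])
  finally show ?thesis .
qed

lemma ph_bound: "\<bar>ph x\<bar> \<le> L * T"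
proof -
  have "\<bar>ph x\<bar> = \<bar>\<phi> (p x) - \<phi> 0\<bar>" using z by (simp add: ph_def)
  also have "\<dots> \<le> L * \<bar>p x - 0\<bar>" using Tpos by (intro phi_lip p_range) auto
  also have "\<dots> \<le> L * T" using p_range[of x] Lnn by (intro mult_left_mono) auto
  finally show ?thesis .
qed

lemma ps_bound: "\<bar>ps x\<bar> \<le> L" unfolding ps_def by (rule Lb[OF p_range])
lemma dd_bound: "\<bar>dd x\<bar> \<le> L" using ps_bound[of x] Lnn by (auto simp: dd_def indicator_def)

lemma phi_at: "0 < x \<Longrightarrow> (\<phi> has_real_derivative \<phi>' x) (at x)"
  using der[of x] at_within_interior[of x "{0..}"] by auto

lemma ph_deriv: assumes "x \<noteq> 0" "x < T" shows "(ph has_real_derivative dd x) (at x)"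
proof (cases "x < 0")
  case True
  have "((\<lambda>_. 0) has_real_derivative 0) (at x)" by simp
  then have "((\<lambda>_. 0) has_real_derivative dd x) (at x)" using True by (simp add: dd_def)
  then show ?thesis
    by (rule has_field_derivative_transform_within_open[where S="{..<0}"])
       (use True z in \<open>auto simp: ph_def p_def\<close>)
next
  case False
  then have x: "0 < x" using assms by auto
  have "dd x = \<phi>' x" using x assms by (simp add: dd_def ps_def p_def)
  then have "(\<phi> has_real_derivative dd x) (at x)" using phi_at[OF x] by simp
  then show ?thesis
    by (rule has_field_derivative_transform_within_open[where S="{0<..<T}"])
       (use x assms in \<open>auto simp: ph_def p_def\<close>)
qed

lemma N0_eq: "N0 \<alpha> a b = \<alpha> / G * (a + b) powr (-(1+\<alpha>))"
proof -
  have e: "(a+b) powr (-(1+\<alpha>)) = 1/((a+b) powr (1+\<alpha>))" by (rule powr_minus_divide)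
  show ?thesis unfolding N0_def G_def by (simp only: e) simp
qed
lemma N1_eq: "N1 \<alpha> a b = 1 / G * (a + b) powr (-\<alpha>)"
proof -
  have e: "(a+b) powr (-\<alpha>) = 1/((a+b) powr \<alpha>)" by (rule powr_minus_divide)
  show ?thesis unfolding N1_def G_def by (simp only: e) simp
qed
lemma N0_nn: "0 \<le> N0 \<alpha> a b" using Gpos a0 by (simp add: N0_eq)
lemma N1_nn: "0 \<le> N1 \<alpha> a b" using Gpos a0 by (simp add: N1_eq)
lemma N0_sym: "N0 \<alpha> a b = N0 \<alpha> b a" by (simp add: N0_def add.commute)
lemma N1_sym: "N1 \<alpha> a b = N1 \<alpha> b a" by (simp add: N1_def add.commute)

lemma N0_int: "integrable M (\<lambda>x. indicator B x * N0 \<alpha> (fst x) (snd x))"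
proof -
  have "integrable M (\<lambda>x. \<alpha> / G * (indicator B x * (fst x + snd x) powr (-(1+\<alpha>))))"
    using a0 a1 Tpos by (intro integrable_mult_right kint) auto
  moreover have "(\<lambda>x. \<alpha> / G * (indicator B x * (fst x + snd x) powr (-(1+\<alpha>))))
     = (\<lambda>x. indicator B x * N0 \<alpha> (fst x) (snd x))" by (auto simp: N0_eq)
  ultimately show ?thesis by simp
qed

lemma N1_int: "integrable M (\<lambda>x. indicator B x * N1 \<alpha> (fst x) (snd x))"
proof -
  have "integrable M (\<lambda>x. 1 / G * (indicator B x * (fst x + snd x) powr (-\<alpha>)))"
    using a0 a1 Tpos by (intro integrable_mult_right kint) auto
  moreover have "(\<lambda>x. 1 / G * (indicator B x * (fst x + snd x) powr (-\<alpha>)))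
     = (\<lambda>x. indicator B x * N1 \<alpha> (fst x) (snd x))" by (auto simp: N1_eq)
  ultimately show ?thesis by simp
qed

lemma N0_meas[measurable]: "(\<lambda>x. N0 \<alpha> (fst x) (snd x)) \<in> borel_measurable M"
  unfolding N0_def by measurable
lemma N1_meas[measurable]: "(\<lambda>x. N1 \<alpha> (fst x) (snd x)) \<in> borel_measurable M"
  unfolding N1_def by measurable

end


context S begin

definition W where "W x = indicator B x * N0 \<alpha> (fst x) (snd x)"
definition q where "q u x = ph (u - fst x) * ph (u - snd x)"
definition Dq where "Dq u x = dd (u - fst x) * ph (u - snd x) + ph (u - fst x) * dd (u - snd x)"
definition Fh where "Fh u = 1/2 * integral\<^sup>L M (\<lambda>x. W x * q u x)"
definition Dv where "Dv u = 1/2 * integral\<^sup>L M (\<lambda>x. W x * Dq u x)"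

lemma W_int: "integrable M W" unfolding W_def[abs_def] by (rule N0_int)
lemma W_nn: "0 \<le> W x" unfolding W_def using N0_nn by auto
lemma W_meas[measurable]: "W \<in> borel_measurable M" unfolding W_def[abs_def] by measurable
lemma q_meas[measurable]: "(\<lambda>x. q u x) \<in> borel_measurable M" unfolding q_def by measurable
lemma Dq_meas[measurable]: "(\<lambda>x. Dq u x) \<in> borel_measurable M" unfolding Dq_def by measurable

lemma q_bound: "\<bar>q u x\<bar> \<le> (L*T) * (L*T)"
  unfolding q_def abs_mult using ph_bound Lnn Tpos by (intro mult_mono) auto

lemma Wq_int: "integrable M (\<lambda>x. W x * q u x)"
  by (rule bdd_mult[OF W_int q_meas q_bound])

lemma q_lip: "\<bar>q u x - q v x\<bar> \<le> 2*L*(L*T) * \<bar>u - v\<bar>"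
proof -
  let ?a = "fst x" and ?b = "snd x"
  have "q u x - q v x = (ph (u - ?a) - ph (v - ?a)) * ph (u - ?b) + ph (v - ?a) * (ph (u - ?b) - ph (v - ?b))"
    unfolding q_def by (simp add: algebra_simps)
  then have "\<bar>q u x - q v x\<bar> \<le> \<bar>ph (u - ?a) - ph (v - ?a)\<bar> * \<bar>ph (u - ?b)\<bar> + \<bar>ph (v - ?a)\<bar> * \<bar>ph (u - ?b) - ph (v - ?b)\<bar>"
    by (simp add: abs_mult[symmetric] abs_triangle_ineq)
  also have "\<dots> \<le> (L * \<bar>u - v\<bar>) * (L*T) + (L*T) * (L * \<bar>u - v\<bar>)"
    using ph_lip[of "u - ?a" "v - ?a"] ph_lip[of "u - ?b" "v - ?b"] ph_bound[of "u - ?b"] ph_bound[of "v - ?a"]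
    by (intro add_mono mult_mono) (auto simp: Lnn)
  finally show ?thesis by (simp add: algebra_simps)
qed

lemma q_deriv:
  assumes "fst x \<noteq> t" "snd x \<noteq> t" "x \<in> B" "t < T"
  shows "((\<lambda>u. q u x) has_real_derivative Dq t x) (at t)"
proof -
  have a: "t - fst x \<noteq> 0" "t - fst x < T" "t - snd x \<noteq> 0" "t - snd x < T"
    using assms by (auto simp: mem_Times_iff)
  have "((\<lambda>u. ph (u - fst x)) has_real_derivative dd (t - fst x) * 1) (at t)"
    by (rule DERIV_chain2[where g="\<lambda>u. u - fst x"]) (auto intro!: derivative_eq_intros ph_deriv a)
  then have da: "((\<lambda>u. ph (u - fst x)) has_real_derivative dd (t - fst x)) (at t)" by simp
  have "((\<lambda>u. ph (u - snd x)) has_real_derivative dd (t - snd x) * 1) (at t)"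
    by (rule DERIV_chain2[where g="\<lambda>u. u - snd x"]) (auto intro!: derivative_eq_intros ph_deriv a)
  then have db: "((\<lambda>u. ph (u - snd x)) has_real_derivative dd (t - snd x)) (at t)" by simp
  show ?thesis unfolding q_def Dq_def
    using DERIV_mult[OF da db] by (simp add: algebra_simps)
qed

lemma Fh_deriv:
  assumes "0 < t" "t < T"
  shows "(Fh has_real_derivative Dv t) (at t)"
  unfolding has_field_derivative_iff tendsto_at_iff_sequentially
proof (intro allI impI)
  fix X :: "nat \<Rightarrow> real" assume X: "\<forall>i. X i \<in> UNIV - {t}" "X \<longlonglongrightarrow> t"
  then have Xne: "X i - t \<noteq> 0" for i by auto
  define s where "s i x = W x * ((q (X i) x - q t x) / (X i - t))" for i x
  have eq: "((\<lambda>y. (Fh y - Fh t) / (y - t)) \<circ> X) i = 1/2 * integral\<^sup>L M (s i)" for i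
  proof -
    have "Fh (X i) - Fh t = 1/2 * (integral\<^sup>L M (\<lambda>x. W x * q (X i) x - W x * q t x))"
      unfolding Fh_def by (subst Bochner_Integration.integral_diff[OF Wq_int Wq_int]) (simp add: algebra_simps)
    moreover have "integral\<^sup>L M (s i) = integral\<^sup>L M (\<lambda>x. (W x * q (X i) x - W x * q t x) / (X i - t))"
      unfolding s_def by (simp add: right_diff_distrib)
    ultimately show ?thesis using Xne[of i] by (simp add: field_simps)
  qed
  have lim: "(\<lambda>i. integral\<^sup>L M (s i)) \<longlonglongrightarrow> integral\<^sup>L M (\<lambda>x. W x * Dq t x)"
  proof (rule integral_dominated_convergence[where w="\<lambda>x. W x * (2*L*(L*T))"])
    show "(\<lambda>x. W x * Dq t x) \<in> borel_measurable M" by measurable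
    show "s i \<in> borel_measurable M" for i unfolding s_def by measurable
    show "integrable M (\<lambda>x. W x * (2*L*(L*T)))" by (intro integrable_mult_left W_int)
    show "AE x in M. (\<lambda>i. s i x) \<longlonglongrightarrow> W x * Dq t x"
      using AE_pair_ne[of t t]
    proof eventually_elim
      case (elim x)
      show ?case
      proof (cases "x \<in> B")
        case True
        have "((\<lambda>u. (q u x - q t x) / (u - t)) \<longlongrightarrow> Dq t x) (at t)"
          using q_deriv[of x t] elim True assms by (simp add: has_field_derivative_iff)
        then have "((\<lambda>u. (q u x - q t x) / (u - t)) \<circ> X) \<longlonglongrightarrow> Dq t x"
          using X unfolding tendsto_at_iff_sequentially by blast
        then show ?thesis unfolding s_def by (intro tendsto_mult_left) (simp add: comp_def)
      next
        case False
        then show ?thesis by (simp add: s_def W_def)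
      qed
    qed
    show "AE x in M. norm (s i x) \<le> W x * (2*L*(L*T))" for i
    proof (intro AE_I2)
      fix x
      have h: "\<bar>(q (X i) x - q t x) / (X i - t)\<bar> \<le> 2*L*(L*T)"
        using q_lip[of "X i" x t] Xne[of i] by (simp add: divide_le_eq)
      have "norm (s i x) = W x * \<bar>(q (X i) x - q t x) / (X i - t)\<bar>"
        unfolding s_def real_norm_def abs_mult using W_nn[of x] by simp
      also have "\<dots> \<le> W x * (2*L*(L*T))" by (rule mult_left_mono[OF h W_nn])
      finally show "norm (s i x) \<le> W x * (2*L*(L*T))" .
    qed
  qed
  have "(\<lambda>i. 1/2 * integral\<^sup>L M (s i)) \<longlonglongrightarrow> Dv t"
    unfolding Dv_def by (intro tendsto_mult_left lim)
  moreover have "((\<lambda>y. (Fh y - Fh t) / (y - t)) \<circ> X) = (\<lambda>i. 1/2 * integral\<^sup>L M (s i))"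
    using eq by auto
  ultimately show "((\<lambda>y. (Fh y - Fh t) / (y - t)) \<circ> X) \<longlonglongrightarrow> Dv t" by simp
qed

end


lemma refl_int:
  fixes g :: "real \<Rightarrow> real"
  shows "(LINT r:{0..u}|lborel. g r) = (LINT b:{0..u}|lborel. g (u - b))"
proof -
  have "(LINT r:{0..u}|lborel. g r) = \<bar>-1\<bar> *\<^sub>R (\<integral>x. indicator {0..u} (u + -1 * x) *\<^sub>R g (u + -1 * x) \<partial>lborel)"
    unfolding set_lebesgue_integral_def by (rule lborel_integral_real_affine) simp
  also have "\<dots> = (LINT b:{0..u}|lborel. g (u - b))"
    unfolding set_lebesgue_integral_def by (simp, rule Bochner_Integration.integral_cong) (auto simp: indicator_def)
  finally show ?thesis .
qed

context S begin

lemma iter_prod: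
  fixes f :: "real \<times> real \<Rightarrow> real"
  assumes "integrable M (\<lambda>x. indicator B x * f x)"
  shows "(LINT a:{0..T}|lborel. LINT b:{0..T}|lborel. f (a,b)) = integral\<^sup>L M (\<lambda>x. indicator B x * f x)"
proof -
  have "(LINT a:{0..T}|lborel. LINT b:{0..T}|lborel. f (a,b)) =
        (\<integral>a. (\<integral>b. indicator B (a,b) * f (a,b) \<partial>lborel) \<partial>lborel)"
    unfolding set_lebesgue_integral_def
    by (intro Bochner_Integration.integral_cong refl) (simp add: indicator_times mult.assoc)
  also have "\<dots> = integral\<^sup>L M (\<lambda>x. indicator B x * f x)"
    using lborel_pair.integral_fst'[OF assms] by simp
  finally show ?thesis .
qed

definition F where "F u = (LINT s:{0..u}|lborel. LINT r:{0..u}|lborel.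
              1/2 * N0 \<alpha> (u - r) (u - s) * \<phi> s * \<phi> r)"

lemma ph_eq: "x \<in> {0..T} \<Longrightarrow> ph x = \<phi> x" by (simp add: ph_def p_def)
lemma ph_neg: "x \<le> 0 \<Longrightarrow> ph x = 0" using z by (simp add: ph_def p_def)
lemma ps_eq: "x \<in> {0..T} \<Longrightarrow> ps x = \<phi>' x" by (simp add: ps_def p_def)

lemma F_eq:
  assumes "0 < u" "u \<le> T"
  shows "F u = Fh u"
proof -
  let ?E = "\<lambda>a b. 1/2 * N0 \<alpha> a b * ph (u - a) * ph (u - b)"
  have inner: "(LINT r:{0..u}|lborel. 1/2 * N0 \<alpha> (u - r) (u - s) * \<phi> s * \<phi> r)
        = (LINT b:{0..T}|lborel. 1/2 * N0 \<alpha> b (u - s) * \<phi> s * ph (u - b))" for s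
  proof -
    have "(LINT r:{0..u}|lborel. 1/2 * N0 \<alpha> (u - r) (u - s) * \<phi> s * \<phi> r)
        = (LINT b:{0..u}|lborel. 1/2 * N0 \<alpha> b (u - s) * \<phi> s * \<phi> (u - b))"
      by (subst refl_int) simp
    also have "\<dots> = (LINT b:{0..T}|lborel. 1/2 * N0 \<alpha> b (u - s) * \<phi> s * ph (u - b))"
      unfolding set_lebesgue_integral_def
      using assms by (intro Bochner_Integration.integral_cong refl) (auto simp: indicator_def ph_eq ph_neg)
    finally show ?thesis .
  qed
  have "F u = (LINT s:{0..u}|lborel. LINT b:{0..T}|lborel. 1/2 * N0 \<alpha> b (u - s) * \<phi> s * ph (u - b))"
    unfolding F_def by (simp only: inner)
  also have "\<dots> = (LINT a:{0..u}|lborel. LINT b:{0..T}|lborel. 1/2 * N0 \<alpha> b a * \<phi> (u - a) * ph (u - b))"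
    by (subst refl_int) simp
  also have "\<dots> = (LINT a:{0..T}|lborel. LINT b:{0..T}|lborel. ?E a b)"
    unfolding set_lebesgue_integral_def
  proof (intro Bochner_Integration.integral_cong refl)
    fix a
    show "indicator {0..u} a *\<^sub>R (\<integral>b. indicator {0..T} b *\<^sub>R (1/2 * N0 \<alpha> b a * \<phi> (u - a) * ph (u - b)) \<partial>lborel)
        = indicator {0..T} a *\<^sub>R (\<integral>b. indicator {0..T} b *\<^sub>R ?E a b \<partial>lborel)"
    proof (cases "a \<in> {0..u}")
      case True
      then have "\<phi> (u - a) = ph (u - a)" using assms by (simp add: ph_eq)
      then show ?thesis using True assms by (simp add: N0_sym mult_ac)
    next
      case False
      then have "a < 0 \<or> u < a" by auto
      then show ?thesis using ph_neg[of "u - a"] by (auto simp: indicator_def)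
    qed
  qed
  also have "\<dots> = integral\<^sup>L M (\<lambda>x. indicator B x * ?E (fst x) (snd x))"
  proof (subst iter_prod[symmetric])
    show "integrable M (\<lambda>x. indicator B x * ?E (fst x) (snd x))"
    proof -
      have "integrable M (\<lambda>x. W x * (1/2 * q u x))"
        by (rule bdd_mult[OF W_int, where C="L*T*(L*T)/2"]) (use q_bound[of u] in \<open>auto simp: abs_mult\<close>)
      moreover have "(\<lambda>x. W x * (1/2 * q u x)) = (\<lambda>x. indicator B x * ?E (fst x) (snd x))"
        by (auto simp: W_def q_def)
      ultimately show ?thesis by simp
    qed
  qed simp
  also have "\<dots> = Fh u"
    unfolding Fh_def by (subst integral_mult_right_zero[symmetric]) (auto simp: W_def q_def intro!: Bochner_Integration.integral_cong)
  finally show ?thesis .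
qed

end


context S begin

lemma N1_deriv:
  assumes "0 < a + b"
  shows "((\<lambda>b. N1 \<alpha> a b) has_real_derivative - N0 \<alpha> a b) (at b)"
proof -
  have "((\<lambda>b. (a + b) powr (-\<alpha>)) has_real_derivative (-\<alpha> * (a + b) powr (-\<alpha> - 1)) * 1) (at b)"
    by (rule DERIV_chain2[where g="\<lambda>b. a + b", OF has_real_derivative_powr])
       (use assms in \<open>auto intro!: derivative_eq_intros\<close>)
  then have "((\<lambda>b. 1/G * (a + b) powr (-\<alpha>)) has_real_derivative 1/G * (-\<alpha> * (a + b) powr (-\<alpha> - 1) * 1)) (at b)"
    by (rule DERIV_cmult)
  moreover have e: "(a+b) powr (-\<alpha>-1) = (a+b) powr (-(1+\<alpha>))"
    by (rule arg_cong[where f="\<lambda>x. (a+b) powr x"]) simp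
  moreover have "1/G * (-\<alpha> * (a + b) powr (-\<alpha> - 1) * 1) = - N0 \<alpha> a b"
    by (simp only: N0_eq e) simp
  ultimately show ?thesis by (simp add: N1_eq)
qed

lemma ibp:
  assumes a: "0 < a" and t: "0 \<le> t" "t \<le> T"
  shows "(LINT b:{0..T}|lborel. N0 \<alpha> a b * ph (t - b))
       = N1 \<alpha> a 0 * \<phi> t - (LINT b:{0..t}|lborel. N1 \<alpha> a b * ps (t - b))"
proof -
  have 1: "(LINT b:{0..T}|lborel. N0 \<alpha> a b * ph (t - b)) = (LINT b:{0..t}|lborel. N0 \<alpha> a b * ph (t - b))"
    unfolding set_lebesgue_integral_def
    using t by (intro Bochner_Integration.integral_cong refl) (auto simp: indicator_def ph_neg)
  have cph: "continuous_on {0..t} (\<lambda>b. ph (t - b))"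
    by (rule continuous_on_compose2[OF ph_cont]) (auto intro!: continuous_intros)
  have cps: "continuous_on {0..t} (\<lambda>b. ps (t - b))"
    by (rule continuous_on_compose2[OF ps_cont]) (auto intro!: continuous_intros)
  have cN0: "continuous_on {0..t} (\<lambda>b. N0 \<alpha> a b)"
    unfolding N0_eq using a Gpos by (auto intro!: continuous_intros)
  have cN1: "continuous_on {0..t} (\<lambda>b. N1 \<alpha> a b)"
    unfolding N1_eq using a Gpos by (auto intro!: continuous_intros)
  have c0: "continuous_on {0..t} (\<lambda>b. N0 \<alpha> a b * ph (t - b))" by (intro continuous_on_mult cN0 cph)
  have c1: "continuous_on {0..t} (\<lambda>b. N1 \<alpha> a b * ps (t - b))" by (intro continuous_on_mult cN1 cps)
  have e0: "(LINT b:{0..t}|lborel. N0 \<alpha> a b * ph (t - b)) = integral {0..t} (\<lambda>b. N0 \<alpha> a b * ph (t - b))"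
    by (rule set_borel_integral_eq_integral(2))
       (use borel_integrable_compact[OF compact_Icc c0] in \<open>simp add: set_integrable_def\<close>)
  have e1: "(LINT b:{0..t}|lborel. N1 \<alpha> a b * ps (t - b)) = integral {0..t} (\<lambda>b. N1 \<alpha> a b * ps (t - b))"
    by (rule set_borel_integral_eq_integral(2))
       (use borel_integrable_compact[OF compact_Icc c1] in \<open>simp add: set_integrable_def\<close>)
  have ftc: "((\<lambda>b. N0 \<alpha> a b * ph (t - b) + N1 \<alpha> a b * ps (t - b)) has_integral
      ((\<lambda>b. - (N1 \<alpha> a b * ph (t - b))) t - (\<lambda>b. - (N1 \<alpha> a b * ph (t - b))) 0)) {0..t}"
  proof (rule fundamental_theorem_of_calculus_interior[OF t(1)])
    show "continuous_on {0..t} (\<lambda>b. - (N1 \<alpha> a b * ph (t - b)))"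
      by (intro continuous_intros cN1 cph)
    fix b assume b: "b \<in> {0<..<t}"
    have "((\<lambda>b. ph (t - b)) has_real_derivative dd (t - b) * (-1)) (at b)"
      by (rule DERIV_chain2[where g="\<lambda>b. t - b", OF ph_deriv])
         (use b t in \<open>auto intro!: derivative_eq_intros\<close>)
    moreover have "dd (t - b) = ps (t - b)" using b by (simp add: dd_def)
    ultimately have dph: "((\<lambda>b. ph (t - b)) has_real_derivative - ps (t - b)) (at b)" by simp
    have "0 < a + b" using a b by auto
    note DERIV_mult'[OF N1_deriv[OF this] dph, THEN DERIV_minus]
    then show "((\<lambda>b. - (N1 \<alpha> a b * ph (t - b))) has_vector_derivative
            (N0 \<alpha> a b * ph (t - b) + N1 \<alpha> a b * ps (t - b))) (at b)"
      by (simp add: has_real_derivative_iff_has_vector_derivative[symmetric] algebra_simps)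
  qed
  have "(\<lambda>b. - (N1 \<alpha> a b * ph (t - b))) t - (\<lambda>b. - (N1 \<alpha> a b * ph (t - b))) 0 = N1 \<alpha> a 0 * \<phi> t"
    using t z by (simp add: ph_eq ph_def p_def)
  with ftc have ftc': "((\<lambda>b. N0 \<alpha> a b * ph (t - b) + N1 \<alpha> a b * ps (t - b)) has_integral N1 \<alpha> a 0 * \<phi> t) {0..t}"
    by simp
  have i1: "((\<lambda>b. N1 \<alpha> a b * ps (t - b)) has_integral integral {0..t} (\<lambda>b. N1 \<alpha> a b * ps (t - b))) {0..t}"
    by (intro integrable_integral integrable_continuous_interval c1)
  have "((\<lambda>b. (N0 \<alpha> a b * ph (t - b) + N1 \<alpha> a b * ps (t - b)) - N1 \<alpha> a b * ps (t - b)) has_integral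
        N1 \<alpha> a 0 * \<phi> t - integral {0..t} (\<lambda>b. N1 \<alpha> a b * ps (t - b))) {0..t}"
    by (rule has_integral_diff[OF ftc' i1])
  then have "integral {0..t} (\<lambda>b. N0 \<alpha> a b * ph (t - b)) = N1 \<alpha> a 0 * \<phi> t - integral {0..t} (\<lambda>b. N1 \<alpha> a b * ps (t - b))"
    by (simp add: integral_unique)
  then show ?thesis using 1 e0 e1 by simp
qed

end


context S begin

definition I1 where "I1 t a = (LINT b:{0..t}|lborel. N1 \<alpha> a b * ps (t - b))"

lemma W_swap: "W (y, x) = W (x, y)"
  unfolding W_def by (auto simp: indicator_def mem_Times_iff N0_sym)

lemma Dv_eq1:
  "Dv t = integral\<^sup>L M (\<lambda>x. W x * (dd (t - fst x) * ph (t - snd x)))"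
proof -
  have iA: "integrable M (\<lambda>x. W x * (dd (t - fst x) * ph (t - snd x)))"
    by (rule bdd_mult[OF W_int, where C="L*(L*T)"]) (auto simp: abs_mult intro!: mult_mono dd_bound ph_bound Lnn)
  have iB: "integrable M (\<lambda>x. W x * (ph (t - fst x) * dd (t - snd x)))"
    by (rule bdd_mult[OF W_int, where C="(L*T)*L"]) (use Lnn Tpos in \<open>auto simp: abs_mult intro!: mult_mono dd_bound ph_bound\<close>)
  have sw: "integral\<^sup>L M (\<lambda>x. W x * (ph (t - fst x) * dd (t - snd x)))
      = integral\<^sup>L M (\<lambda>x. W x * (dd (t - fst x) * ph (t - snd x)))"
  proof -
    have "integral\<^sup>L M (\<lambda>x. W x * (ph (t - fst x) * dd (t - snd x)))
        = (\<integral>(x,y). (\<lambda>x. W x * (dd (t - fst x) * ph (t - snd x))) (y,x) \<partial>M)"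
      by (intro Bochner_Integration.integral_cong refl) (auto simp: W_swap mult_ac)
    also have "\<dots> = integral\<^sup>L M (\<lambda>x. W x * (dd (t - fst x) * ph (t - snd x)))"
      by (rule lborel_pair.integral_product_swap) measurable
    finally show ?thesis .
  qed
  have "Dv t = 1/2 * (integral\<^sup>L M (\<lambda>x. W x * (dd (t - fst x) * ph (t - snd x)))
                 + integral\<^sup>L M (\<lambda>x. W x * (ph (t - fst x) * dd (t - snd x))))"
    unfolding Dv_def Dq_def
    by (subst Bochner_Integration.integral_add[OF iA iB, symmetric]) (simp add: algebra_simps)
  then show ?thesis using sw by simp
qed

lemma N1_int_t:
  assumes "0 \<le> t"
  shows "integrable M (\<lambda>x. indicator ({0..t}\<times>{0..t}) x * N1 \<alpha> (fst x) (snd x))"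
proof -
  have "integrable M (\<lambda>x. 1 / G * (indicator ({0..t}\<times>{0..t}) x * (fst x + snd x) powr (-\<alpha>)))"
    using a0 a1 assms by (intro integrable_mult_right kint) auto
  moreover have "(\<lambda>x. 1 / G * (indicator ({0..t}\<times>{0..t}) x * (fst x + snd x) powr (-\<alpha>)))
     = (\<lambda>x. indicator ({0..t}\<times>{0..t}) x * N1 \<alpha> (fst x) (snd x))" by (auto simp: N1_eq)
  ultimately show ?thesis by simp
qed

lemma Dv_eq:
  assumes t: "0 < t" "t < T"
  shows "Dv t = \<phi> t * (LINT a:{0..t}|lborel. ps (t - a) * N1 \<alpha> a 0)
               - (LINT a:{0..t}|lborel. ps (t - a) * I1 t a)"
proof -
  have int: "integrable M (\<lambda>x. indicator B x * (N0 \<alpha> (fst x) (snd x) * (dd (t - fst x) * ph (t - snd x))))"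
  proof -
    have "integrable M (\<lambda>x. W x * (dd (t - fst x) * ph (t - snd x)))"
      by (rule bdd_mult[OF W_int, where C="L*(L*T)"]) (auto simp: abs_mult intro!: mult_mono dd_bound ph_bound Lnn)
    then show ?thesis by (simp add: W_def mult_ac)
  qed
  have "(LINT a:{0..T}|lborel. LINT b:{0..T}|lborel. N0 \<alpha> a b * (dd (t - a) * ph (t - b)))
     = integral\<^sup>L M (\<lambda>x. indicator B x * (N0 \<alpha> (fst x) (snd x) * (dd (t - fst x) * ph (t - snd x))))"
    using iter_prod[OF int] by simp
  then have "Dv t = (LINT a:{0..T}|lborel. LINT b:{0..T}|lborel. N0 \<alpha> a b * (dd (t - a) * ph (t - b)))"
    by (simp add: Dv_eq1 W_def mult_ac)
  also have "\<dots> = (LINT a:{0..t}|lborel. ps (t - a) * (N1 \<alpha> a 0 * \<phi> t - I1 t a))"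
    unfolding set_lebesgue_integral_def
  proof (rule integral_discrete_difference[where X="{0,t}"])
    fix a :: real assume "a \<notin> {0, t}"
    then have a: "a \<noteq> 0" "a \<noteq> t" by auto
    show "indicator {0..T} a *\<^sub>R (\<integral>b. indicator {0..T} b *\<^sub>R (N0 \<alpha> a b * (dd (t - a) * ph (t - b))) \<partial>lborel)
        = indicator {0..t} a *\<^sub>R (ps (t - a) * (N1 \<alpha> a 0 * \<phi> t - I1 t a))"
    proof (cases "0 < a \<and> a < t")
      case True
      have "dd (t - a) = ps (t - a)" using True by (simp add: dd_def)
      moreover have "(\<integral>b. indicator {0..T} b *\<^sub>R (N0 \<alpha> a b * (ps (t - a) * ph (t - b))) \<partial>lborel)
          = ps (t - a) * (LINT b:{0..T}|lborel. N0 \<alpha> a b * ph (t - b))"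
        unfolding set_lebesgue_integral_def
        by (subst integral_mult_right_zero[symmetric]) (intro Bochner_Integration.integral_cong refl, simp add: mult_ac)
      moreover have "(LINT b:{0..T}|lborel. N0 \<alpha> a b * ph (t - b)) = N1 \<alpha> a 0 * \<phi> t - I1 t a"
        unfolding I1_def using True t by (intro ibp) auto
      ultimately show ?thesis using True t by simp
    next
      case False
      then have "a < 0 \<or> t < a" using a by auto
      then show ?thesis
      proof
        assume "a < 0" then show ?thesis by simp
      next
        assume "t < a"
        then have "dd (t - a) = 0" by (simp add: dd_def)
        then show ?thesis using \<open>t < a\<close> by simp
      qed
    qed
  qed (auto simp: emeasure_lborel_singleton countable_finite)
  also have "\<dots> = \<phi> t * (LINT a:{0..t}|lborel. ps (t - a) * N1 \<alpha> a 0)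
               - (LINT a:{0..t}|lborel. ps (t - a) * I1 t a)"
  proof -
    have i1: "integrable lborel (\<lambda>a. indicator {0..t} a * (ps (t - a) * N1 \<alpha> a 0))"
    proof -
      have "integrable lborel (\<lambda>a. (indicator {0..t} a * a powr (-\<alpha>)) * (ps (t - a) / G))"
        by (rule bdd_mult[OF pow1d, where C="L / G"]) (use a1 t Gpos ps_bound in \<open>auto simp: divide_right_mono\<close>)
      moreover have "(\<lambda>a. (indicator {0..t} a * a powr (-\<alpha>)) * (ps (t - a) / G))
          = (\<lambda>a. indicator {0..t} a * (ps (t - a) * N1 \<alpha> a 0))" by (auto simp: N1_eq)
      ultimately show ?thesis by simp
    qed
    have i2: "integrable lborel (\<lambda>a. indicator {0..t} a * (ps (t - a) * I1 t a))"
    proof -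
      have "integrable M (\<lambda>x. indicator ({0..t}\<times>{0..t}) x * N1 \<alpha> (fst x) (snd x) * (ps (t - fst x) * ps (t - snd x)))"
        by (rule bdd_mult[OF N1_int_t, where C="L*L"]) (use t in \<open>auto simp: abs_mult intro!: mult_mono ps_bound Lnn\<close>)
      from lborel_pair.integrable_fst'[OF this]
      have "integrable lborel (\<lambda>a. \<integral>b. indicator ({0..t}\<times>{0..t}) (a,b) * N1 \<alpha> a b * (ps (t - a) * ps (t - b)) \<partial>lborel)"
        by simp
      moreover have "(\<lambda>a. \<integral>b. indicator ({0..t}\<times>{0..t}) (a,b) * N1 \<alpha> a b * (ps (t - a) * ps (t - b)) \<partial>lborel)
         = (\<lambda>a. indicator {0..t} a * (ps (t - a) * I1 t a))"
        unfolding I1_def set_lebesgue_integral_def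
        by (auto simp: indicator_times integral_mult_right_zero[symmetric] mult_ac intro!: Bochner_Integration.integral_cong)
      ultimately show ?thesis by simp
    qed
    show ?thesis
      unfolding set_lebesgue_integral_def
      using Bochner_Integration.integral_diff[OF integrable_mult_right[OF i1, of "\<phi> t"] i2]
      by (simp add: algebra_simps)
  qed
  finally show ?thesis .
qed

end


context S begin

lemma caputo_eq:
  assumes t: "0 < t" "t \<le> T"
  shows "caputo \<alpha> \<phi> t = (LINT a:{0..t}|lborel. ps (t - a) * N1 \<alpha> a 0)"
proof -
  have "caputo \<alpha> \<phi> t = 1 / G * (LINT a:{0..t}|lborel. a powr (-\<alpha>) * deriv \<phi> (t - a))"
    unfolding caputo_def G_def by (subst refl_int) simp
  also have "\<dots> = (LINT a:{0..t}|lborel. ps (t - a) * N1 \<alpha> a 0)"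
    unfolding set_lebesgue_integral_def
  proof (subst integral_mult_right_zero[symmetric], rule integral_discrete_difference[where X="{t}"])
    fix a :: real assume "a \<notin> {t}"
    then have a: "a \<noteq> t" by auto
    show "1 / G * (indicator {0..t} a *\<^sub>R (a powr (-\<alpha>) * deriv \<phi> (t - a)))
        = indicator {0..t} a *\<^sub>R (ps (t - a) * N1 \<alpha> a 0)"
    proof (cases "a \<in> {0..t}")
      case True
      then have pos: "0 < t - a" using a by auto
      have "deriv \<phi> (t - a) = \<phi>' (t - a)" by (rule DERIV_imp_deriv[OF phi_at[OF pos]])
      moreover have "ps (t - a) = \<phi>' (t - a)" using True t by (intro ps_eq) auto
      ultimately show ?thesis using True by (simp add: N1_eq)
    qed simp
  qed (auto simp: emeasure_lborel_singleton)
  finally show ?thesis .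
qed

lemma dbl_eq:
  assumes t: "0 < t" "t \<le> T"
  shows "(LINT s:{0..t}|lborel. LINT r:{0..t}|lborel. N1 \<alpha> (t - r) (t - s) * \<phi>' s * \<phi>' r)
       = (LINT a:{0..t}|lborel. ps (t - a) * I1 t a)"
proof -
  have inner: "(LINT r:{0..t}|lborel. N1 \<alpha> (t - r) (t - s) * \<phi>' s * \<phi>' r)
        = (LINT b:{0..t}|lborel. N1 \<alpha> b (t - s) * \<phi>' s * \<phi>' (t - b))" for s
    by (subst refl_int) simp
  have "(LINT s:{0..t}|lborel. LINT r:{0..t}|lborel. N1 \<alpha> (t - r) (t - s) * \<phi>' s * \<phi>' r)
      = (LINT s:{0..t}|lborel. LINT b:{0..t}|lborel. N1 \<alpha> b (t - s) * \<phi>' s * \<phi>' (t - b))"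
    by (simp only: inner)
  also have "\<dots> = (LINT a:{0..t}|lborel. LINT b:{0..t}|lborel. N1 \<alpha> b a * \<phi>' (t - a) * \<phi>' (t - b))"
    by (subst refl_int) simp
  also have "\<dots> = (LINT a:{0..t}|lborel. ps (t - a) * I1 t a)"
  proof (rule set_lebesgue_integral_cong)
    show "{0..t} \<in> sets lborel" by simp
    show "\<forall>a. a \<in> {0..t} \<longrightarrow> (LINT b:{0..t}|lborel. N1 \<alpha> b a * \<phi>' (t - a) * \<phi>' (t - b)) = ps (t - a) * I1 t a"
    proof (intro allI impI)
      fix a :: real assume a: "a \<in> {0..t}"
      have "ps (t - a) * I1 t a = (LINT b:{0..t}|lborel. ps (t - a) * (N1 \<alpha> a b * ps (t - b)))"
        unfolding I1_def set_lebesgue_integral_def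
        by (subst integral_mult_right_zero[symmetric]) (simp add: mult_ac)
      also have "\<dots> = (LINT b:{0..t}|lborel. N1 \<alpha> b a * \<phi>' (t - a) * \<phi>' (t - b))"
      proof (rule set_lebesgue_integral_cong)
        show "{0..t} \<in> sets lborel" by simp
        show "\<forall>b. b \<in> {0..t} \<longrightarrow> ps (t - a) * (N1 \<alpha> a b * ps (t - b)) = N1 \<alpha> b a * \<phi>' (t - a) * \<phi>' (t - b)"
          using a t by (auto simp: ps_eq N1_sym)
      qed
      finally show "(LINT b:{0..t}|lborel. N1 \<alpha> b a * \<phi>' (t - a) * \<phi>' (t - b)) = ps (t - a) * I1 t a" by simp
    qed
  qed
  finally show ?thesis .
qed

end

theorem proposition4p2:
  fixes \<alpha> :: real and \<phi> \<phi>' :: "real \<Rightarrow> real" and t :: real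
  assumes "0 < \<alpha>" "\<alpha> < 1"
    and "\<And>x. 0 \<le> x \<Longrightarrow> (\<phi> has_real_derivative \<phi>' x) (at x within {0..})"
    and "continuous_on {0..} \<phi>'"
    and "\<phi> 0 = 0"
    and "0 < t"
  shows "((\<lambda>u. LINT s:{0..u}|lborel. LINT r:{0..u}|lborel.
              1/2 * N0 \<alpha> (u - r) (u - s) * \<phi> s * \<phi> r)
          has_real_derivative
          (\<phi> t * caputo \<alpha> \<phi> t
           - (LINT s:{0..t}|lborel. LINT r:{0..t}|lborel.
                N1 \<alpha> (t - r) (t - s) * \<phi>' s * \<phi>' r))) (at t)"
proof -
  have "bounded (\<phi>' ` {0..t+1})"
    by (intro compact_imp_bounded compact_continuous_image continuous_on_subset[OF assms(4)]) auto
  then obtain L where L: "\<And>x. x \<in> {0..t+1} \<Longrightarrow> \<bar>\<phi>' x\<bar> \<le> L"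
    unfolding bounded_iff by (metis image_eqI real_norm_def)
  interpret S \<alpha> "t+1" L \<phi> \<phi>'
    using assms L by unfold_locales auto
  have tT: "0 < t" "t < t + 1" using assms by auto
  have d: "(Fh has_real_derivative Dv t) (at t)" by (rule Fh_deriv[OF tT])
  have "(F has_real_derivative Dv t) (at t)"
    by (rule has_field_derivative_transform_within_open[OF d, where S="{0<..<t+1}"])
       (use tT in \<open>auto simp: F_eq\<close>)
  moreover have "F = (\<lambda>u. LINT s:{0..u}|lborel. LINT r:{0..u}|lborel.
              1/2 * N0 \<alpha> (u - r) (u - s) * \<phi> s * \<phi> r)"
    by (rule ext) (simp add: F_def)
  moreover have "Dv t = \<phi> t * caputo \<alpha> \<phi> t
           - (LINT s:{0..t}|lborel. LINT r:{0..t}|lborel. N1 \<alpha> (t - r) (t - s) * \<phi>' s * \<phi>' r)"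
    using Dv_eq[OF tT] caputo_eq[of t] dbl_eq[of t] tT by simp
  ultimately show ?thesis by simp
qed


end
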